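(* Let $\alpha=\exp\left(\frac{2\pi i}{5}\right)$, let $c,x\in\mathbb{C}$, let $a_1,\dots,a_p\in\mathbb{C}$ and $b_1,\dots,b_q\in\mathbb{C}\setminus\{0,-1,-2,\dots\}$, and suppose either $5p\le 5q+4$ (with $x$ arbitrary), or $p=q+1$ and $\left|\left(\frac{cx^2}{5^{1+q-p}}\right)^5\right|<1$. Then $$\sum_{k=0}^{4}{}_pF_q\left[\begin{array}{c}a_1,\dots,a_p;\\ b_1,\dots,b_q;\end{array}c(x\alpha^k)^2\right] =5\,{}_{5p}F_{5q+4}\left[\begin{array}{c}\Big\{\tfrac{a_j}{5},\tfrac{a_j+1}{5},\tfrac{a_j+2}{5},\tfrac{a_j+3}{5},\tfrac{a_j+4}{5}\Big\}_{j=1}^{p};\\ \tfrac15,\tfrac25,\tfrac35,\tfrac45,\Big\{\tfrac{b_j}{5},\tfrac{b_j+1}{5},\tfrac{b_j+2}{5},\tfrac{b_j+3}{5},\tfrac{b_j+4}{5}\Big\}_{j=1}^{q};\end{array}\left(\frac{cx^2}{5^{1+q-p}}\right)^5\right],$$ where the braces denote the lists of parameters obtained for $j=1,\dots,p$ (resp. $j=1,\dots,q$).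
   Context: The generalized hypergeometric function is ${}_pF_q\left[\begin{array}{c}\alpha_1,\dots,\alpha_p;\\\beta_1,\dots,\beta_q;\end{array}z\right]=\sum_{n=0}^{\infty}\frac{(\alpha_1)_n\cdots(\alpha_p)_n}{(\beta_1)_n\cdots(\beta_q)_n}\frac{z^n}{n!}$, with $(\lambda)_n=\lambda(\lambda+1)\cdots(\lambda+n-1)$, $(\lambda)_0=1$. Values of parameters and variables for which the expressions do not make sense are excluded. *)

theory Defs
  imports "HOL-Analysis.Analysis"
begin

definition hypergeomF :: "complex list \<Rightarrow> complex list \<Rightarrow> complex \<Rightarrow> complex" where
  "hypergeomF as bs z =
     (\<Sum>n. (\<Prod>a\<leftarrow>as. pochhammer a n) / (\<Prod>b\<leftarrow>bs. pochhammer b n) * z ^ n / fact n)"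

definition split5 :: "complex list \<Rightarrow> complex list" where
  "split5 as = concat (map (\<lambda>a. map (\<lambda>i. (a + of_nat i) / 5) [0..<5]) as)"

end

theory Submission
  imports Defs
begin

lemma root_sum:
  fixes n :: nat
  defines "\<omega> \<equiv> exp (2 * of_real pi * \<i> / 5) ^ 2"
  shows "(\<Sum>k=0..4. \<omega> ^ (k*n)) = (if 5 dvd n then 5 else 0)"
proof -
  have w: "\<omega> ^ m = exp (of_nat m * (4 * of_real pi * \<i> / 5))" for m
    unfolding \<omega>_def by (simp add: power_mult[symmetric] exp_of_nat_mult[symmetric] algebra_simps)
  have w1: "\<omega> ^ m = 1 \<longleftrightarrow> 5 dvd m" for m
  proof
    assume "\<omega> ^ m = 1"
    then obtain j :: int where "of_nat m * 4 * pi / 5 = of_int (2*j) * pi"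
      unfolding w exp_eq_1 by auto
    then have "real (m * 2) = real_of_int (5 * j)" by (simp add: field_simps)
    then have "int (m*2) = 5 * j" by linarith
    then show "5 dvd m" by presburger
  next
    assume "5 dvd m"
    then obtain j where "m = 5 * j" by auto
    then show "\<omega> ^ m = 1" unfolding w exp_eq_1 by simp (rule exI[of _ "2 * int j"], simp)
  qed
  show ?thesis
  proof (cases "5 dvd n")
    case True
    then have "\<omega> ^ (k*n) = 1" for k by (simp add: w1)
    then show ?thesis using True by simp
  next
    case False
    have ne: "\<omega> ^ n \<noteq> 1" using False w1 by simp
    have "(\<omega>^n)^5 = 1" using w1 by (simp add: power_mult[symmetric])
    have "(\<Sum>k=0..4. \<omega> ^ (k*n)) = (\<Sum>k<5. (\<omega>^n) ^ k)"
      by (rule sum.cong) (auto simp: power_mult[symmetric] mult.commute)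
    also have "\<dots> = 0" using ne \<open>(\<omega>^n)^5 = 1\<close> by (simp add: geometric_sum)
    finally show ?thesis using False by simp
  qed
qed
lemma poch5:
  fixes a :: complex
  shows "pochhammer a (5*m) = 5^(5*m) * (\<Prod>i<5. pochhammer ((a + of_nat i)/5) m)"
proof (induction m)
  case 0
  then show ?case by simp
next
  case (Suc m)
  have "pochhammer a (5 * Suc m) = pochhammer a (5*m) * pochhammer (a + of_nat (5*m)) 5"
    using pochhammer_product'[of a "5*m" 5] by (simp add: add.commute)
  also have "pochhammer (a + of_nat (5*m)) 5 = (\<Prod>i<5. (a + of_nat i + 5 * of_nat m))"
    by (simp add: numeral_eq_Suc lessThan_Suc pochhammer_Suc algebra_simps)
  finally have 1: "pochhammer a (5 * Suc m) = pochhammer a (5*m) * (\<Prod>i<5. (a + of_nat i + 5 * of_nat m))" .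
  have "(\<Prod>i<5. pochhammer ((a + of_nat i)/5) (Suc m)) = 
     (\<Prod>i<5. pochhammer ((a + of_nat i)/5) m) * (\<Prod>i<5. ((a + of_nat i)/5 + of_nat m))"
    by (simp add: pochhammer_Suc prod.distrib)
  moreover have "(\<Prod>i<5. ((a + of_nat i)/5 + of_nat m)) = (\<Prod>i<5. (a + of_nat i + 5 * of_nat m)) / 5^5"
    by (simp add: numeral_eq_Suc lessThan_Suc field_simps)
  ultimately have "5^(5*Suc m) * (\<Prod>i<5. pochhammer ((a + of_nat i)/5) (Suc m)) =
     5^(5*m) * (\<Prod>i<5. pochhammer ((a + of_nat i)/5) m) * (\<Prod>i<5. (a + of_nat i + 5 * of_nat m))"
    by (simp add: power_add mult.commute)
  then show ?case using 1 Suc.IH by simp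
qed

lemma split5_prod:
  "prod_list (map (\<lambda>a. pochhammer a m) (split5 as)) = (\<Prod>a\<leftarrow>as. \<Prod>i<5. pochhammer ((a + of_nat i)/5) m)"
  by (induction as) (simp_all add: split5_def numeral_eq_Suc lessThan_Suc upt_rec)

lemma poch5_list:
  "(\<Prod>a\<leftarrow>as. pochhammer a (5*m)) = 5^(5*m*length as) * prod_list (map (\<lambda>a. pochhammer a m) (split5 as))"
  unfolding split5_prod
  by (induction as) (simp_all add: poch5 power_add power_mult)

lemma fact5:
  "(fact (5*m) :: complex) = 5^(5*m) * (\<Prod>b\<leftarrow>[1/5, 2/5, 3/5, 4/5]. pochhammer b m) * fact m"
  using poch5[of 1 m] by (simp add: pochhammer_fact numeral_eq_Suc lessThan_Suc field_simps)
lemma prod_list_tendsto1: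
  assumes "\<And>a. a \<in> set as \<Longrightarrow> ((f a) \<longlongrightarrow> (1::complex)) F"
  shows "((\<lambda>n. \<Prod>a\<leftarrow>as. f a n) \<longlongrightarrow> 1) F"
  using assms
proof (induction as)
  case Nil
  then show ?case by simp
next
  case (Cons a as)
  have "((\<lambda>n. f a n * (\<Prod>a\<leftarrow>as. f a n)) \<longlongrightarrow> 1 * 1) F"
    by (intro tendsto_mult) (use Cons in auto)
  then show ?case by simp
qed

lemma lim_ratio1: "(\<lambda>n. (a + of_nat n)/(of_nat n + 1) :: complex) \<longlonglongrightarrow> 1"
proof -
  have e: "(a + of_nat n)/(of_nat n + 1) = 1 + (a - 1) / of_nat (Suc n)" for n
  proof -
    have "(of_nat n + 1 :: complex) \<noteq> 0" by (metis of_nat_Suc of_nat_eq_0_iff nat.distinct(1) add.commute)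
    then show ?thesis by (simp add: field_simps)
  qed
  have "(\<lambda>n. (a - 1) / of_nat (Suc n) :: complex) \<longlonglongrightarrow> 0"
    by (intro tendsto_divide_0[OF tendsto_const] filterlim_compose[OF tendsto_of_nat filterlim_Suc])
  then have "(\<lambda>n. 1 + (a - 1) / of_nat (Suc n) :: complex) \<longlonglongrightarrow> 1 + 0"
    by (intro tendsto_add tendsto_const)
  then show ?thesis unfolding e by simp
qed

lemma prod_list_div: "(\<Prod>a\<leftarrow>as. f a / (d::complex)) = (\<Prod>a\<leftarrow>as. f a) / d ^ length as"
  by (induction as) simp_all

lemma prod_list_mult: "(\<Prod>a\<leftarrow>as. f a * (g a::complex)) = (\<Prod>a\<leftarrow>as. f a) * (\<Prod>a\<leftarrow>as. g a)"
  by (induction as) (simp_all add: mult_ac)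

lemma prod_list_nz: "(\<And>a. a \<in> set as \<Longrightarrow> f a \<noteq> (0::complex)) \<Longrightarrow> (\<Prod>a\<leftarrow>as. f a) \<noteq> 0"
  by (induction as) simp_all

lemma poch_nz:
  assumes "\<forall>b\<in>set bs. b \<notin> \<int>\<^sub>\<le>\<^sub>0"
  shows "(\<Prod>b\<leftarrow>bs. pochhammer b n) \<noteq> (0::complex)"
proof (rule prod_list_nz)
  fix b assume "b \<in> set bs"
  then have "b \<notin> \<int>\<^sub>\<le>\<^sub>0" using assms by auto
  then show "pochhammer b n \<noteq> 0" by (auto simp: pochhammer_eq_0_iff)
qed

lemma hyp_summable:
  fixes z :: complex
  assumes hb: "\<forall>b\<in>set bs. b \<notin> \<int>\<^sub>\<le>\<^sub>0"
    and hc: "length as \<le> length bs \<or> (length as = length bs + 1 \<and> norm z < 1)"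
  shows "summable (\<lambda>n. (\<Prod>a\<leftarrow>as. pochhammer a n) / (\<Prod>b\<leftarrow>bs. pochhammer b n) * z^n / fact n)"
    (is "summable ?f")
proof -
  define p where "p = length as"
  define q where "q = length bs"
  define r where "r n = z * (\<Prod>a\<leftarrow>as. a + of_nat n) / (\<Prod>b\<leftarrow>bs. b + of_nat n) / (of_nat n + 1)" for n :: nat
  have bnz: "(\<Prod>b\<leftarrow>bs. b + of_nat n) \<noteq> 0" for n
  proof (rule prod_list_nz)
    fix b assume "b \<in> set bs"
    then have "b \<notin> \<int>\<^sub>\<le>\<^sub>0" using hb by auto
    then show "b + of_nat n \<noteq> 0"
      by (metis add.commute add_eq_0_iff minus_of_nat_in_nonpos_Ints)
  qed
  have n1: "(of_nat n + 1 :: complex) \<noteq> 0" for n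
    by (metis of_nat_Suc of_nat_eq_0_iff nat.distinct(1) add.commute)
  have rec: "?f (Suc n) = ?f n * r n" for n
  proof -
    have "?f (Suc n) = (\<Prod>a\<leftarrow>as. pochhammer a n) * (\<Prod>a\<leftarrow>as. a + of_nat n) /
        ((\<Prod>b\<leftarrow>bs. pochhammer b n) * (\<Prod>b\<leftarrow>bs. b + of_nat n)) * (z^n * z) / (fact n * (of_nat n + 1))"
      by (simp add: pochhammer_Suc prod_list_mult mult_ac)
    also have "\<dots> = ?f n * r n"
      unfolding r_def using bnz[of n] n1[of n] poch_nz[OF hb, of n]
      by (simp add: field_simps)
    finally show ?thesis .
  qed
  define R where "R n = (\<Prod>a\<leftarrow>as. (a + of_nat n) / (of_nat n + 1)) / (\<Prod>b\<leftarrow>bs. (b + of_nat n) / (of_nat n + 1))" for n :: nat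
  define g where "g n = (of_nat n + 1)^p / (of_nat n + 1)^q / (of_nat n + 1 :: complex)" for n :: nat
  have rRg: "r n = z * R n * g n" for n
  proof -
    have gen: "z * A / B / d = z * (A / d^p / (B / d^q)) * (d^p / d^q / d)"
      if "B \<noteq> 0" "d \<noteq> 0" for A B d :: complex
      using that by (simp add: field_simps)
    show ?thesis unfolding r_def R_def g_def prod_list_div p_def[symmetric] q_def[symmetric]
      by (rule gen[OF bnz[of n] n1[of n]])
  qed
  have R1: "R \<longlonglongrightarrow> 1"
  proof -
    have "R \<longlonglongrightarrow> 1 / 1" unfolding R_def
      by (intro tendsto_divide prod_list_tendsto1 lim_ratio1) simp
    then show ?thesis by simp
  qed
  obtain L where gL: "g \<longlonglongrightarrow> L" and zL: "norm (z * L) < 1"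
  proof (cases "p \<le> q")
    case True
    have geq: "g n = inverse (of_nat (Suc n)) ^ (q - p + 1)" for n
    proof -
      have "(of_nat n + 1 :: complex)^q = (of_nat n + 1)^p * (of_nat n + 1)^(q-p)"
        using True by (simp add: power_add[symmetric])
      then show ?thesis unfolding g_def using n1[of n]
        by (simp add: field_simps power_inverse)
    qed
    have gfun: "g = (\<lambda>n. inverse (of_nat (Suc n) :: complex) ^ (q - p + 1))" using geq by (intro ext)
    have "(\<lambda>n. inverse (of_nat (Suc n) :: complex) ^ (q - p + 1)) \<longlonglongrightarrow> 0 ^ (q - p + 1)"
      by (intro tendsto_power filterlim_compose[OF tendsto_inverse_0 filterlim_compose[OF tendsto_of_nat filterlim_Suc]])
    then have "g \<longlonglongrightarrow> 0" unfolding gfun by simp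
    then show ?thesis using that[of 0] by simp
  next
    case False
    then have "p = q + 1" "norm z < 1" using hc p_def q_def by auto
    then have "g n = 1" for n unfolding g_def using n1[of n] by simp
    then have "g = (\<lambda>n. 1)" by (intro ext)
    then have "g \<longlonglongrightarrow> 1" by simp
    then show ?thesis using that[of 1] \<open>norm z < 1\<close> by simp
  qed
  have "(\<lambda>n. norm (r n)) \<longlonglongrightarrow> norm (z * 1 * L)"
    unfolding rRg by (intro tendsto_norm tendsto_mult tendsto_const R1 gL)
  moreover have "norm (z * 1 * L) < (norm (z * L) + 1) / 2" using zL by simp
  ultimately have "eventually (\<lambda>n. norm (r n) < (norm (z * L) + 1) / 2) sequentially"
    by (rule order_tendstoD(2))
  then obtain N where N: "\<And>n. n \<ge> N \<Longrightarrow> norm (r n) < (norm (z * L) + 1) / 2"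
    by (auto simp: eventually_sequentially)
  show ?thesis
  proof (rule summable_ratio_test)
    show "(norm (z * L) + 1) / 2 < 1" using zL by simp
    fix n assume "n \<ge> N"
    then have "norm (?f n) * norm (r n) \<le> norm (?f n) * ((norm (z * L) + 1) / 2)"
      using N[of n] by (intro mult_left_mono) auto
    then show "norm (?f (Suc n)) \<le> (norm (z * L) + 1) / 2 * norm (?f n)"
      unfolding rec norm_mult by (simp add: mult.commute)
  qed
qed
lemma W: fixes z0::complex shows "((z0 / (5^(1+q)/5^p))^5)^m = z0^(5*m) * 5^(5*m*p) / (5^(5*m) * 5^(5*m*q))"
proof -
  have "((z0 / (5^(1+q)/5^p))^5)^m = (z0 * 5^p / 5^(1+q))^(5*m)"
    by (simp add: power_mult)
  also have "\<dots> = z0^(5*m) * (5^p)^(5*m) / (5^(1+q))^(5*m)"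
    by (simp only: power_divide power_mult_distrib)
  also have "\<dots> = z0^(5*m) * 5^(5*m*p) / (5^(5*m) * 5^(5*m*q))"
    by (simp add: power_mult[symmetric] power_add mult_ac add_mult_distrib2)
  finally show ?thesis .
qed

lemma fin: fixes PA PB P4 z0 f :: complex
  assumes "PB \<noteq> 0" "P4 \<noteq> 0" "f \<noteq> 0"
  shows "(X::complex)^(5*m*p) * PA / (X^(5*m*q) * PB) / (X^(5*m) * P4 * f) * z0^(5*m) * 5 =
     5 * (PA / (P4 * PB) / f * (z0^(5*m) * X^(5*m*p) / (X^(5*m) * X^(5*m*q))))"
  using assms by (simp add: field_simps)

lemma shuffle: "A / B * u / f = A / B / f * (u::complex)" by simp

theorem theorem7:
  fixes c x :: complex and as bs :: "complex list"
  defines "\<alpha> \<equiv> exp (2 * of_real pi * \<i> / 5)"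
  defines "p \<equiv> length as" and "q \<equiv> length bs"
  assumes hb: "\<forall>b\<in>set bs. b \<notin> \<int>\<^sub>\<le>\<^sub>0"
  assumes hpq: "5 * p \<le> 5 * q + 4 \<or>
      (p = q + 1 \<and> norm ((c * x^2 / 5 powi (1 + int q - int p)) ^ 5) < 1)"
  shows "(\<Sum>k=0..4. hypergeomF as bs (c * (x * \<alpha> ^ k)^2)) =
     5 * hypergeomF (split5 as) ([1/5, 2/5, 3/5, 4/5] @ split5 bs)
           ((c * x^2 / 5 powi (1 + int q - int p)) ^ 5)"
proof -
  define z0 where "z0 = c * x^2"
  define \<omega> where "\<omega> = \<alpha>^2"
  define w where "w = (c * x^2 / 5 powi (1 + int q - int p)) ^ 5"
  define t where "t n = (\<Prod>a\<leftarrow>as. pochhammer a n) / (\<Prod>b\<leftarrow>bs. pochhammer b n) / fact n" for n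
  define T where "T n = (\<Prod>a\<leftarrow>split5 as. pochhammer a n) /
     (\<Prod>b\<leftarrow>[1/5, 2/5, 3/5, 4/5] @ split5 bs. pochhammer b n) / fact n" for n
  have hF: "hypergeomF as bs u = (\<Sum>n. t n * u^n)" for u
    unfolding hypergeomF_def t_def shuffle ..
  have hF2: "hypergeomF (split5 as) ([1/5, 2/5, 3/5, 4/5] @ split5 bs) u = (\<Sum>n. T n * u^n)" for u
    unfolding hypergeomF_def T_def shuffle ..
  have cond: "length as \<le> length bs \<or> (length as = length bs + 1 \<and> norm z0 < 1)"
  proof (cases "5 * p \<le> 5 * q + 4")
    case True
    then show ?thesis unfolding p_def q_def by simp
  next
    case False
    with hpq have pq: "p = q + 1" and n5: "norm ((c * x^2 / 5 powi (1 + int q - int p)) ^ 5) < 1" by auto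
    then have "norm z0 ^ 5 < 1 ^ 5" unfolding z0_def by (simp add: norm_power)
    then have "norm z0 < 1" by (rule power_less_imp_less_base) simp
    then show ?thesis using pq p_def q_def by simp
  qed
  have summ: "summable (\<lambda>n. t n * u^n)" if "norm u = norm z0" for u
  proof -
    have "summable (\<lambda>n. (\<Prod>a\<leftarrow>as. pochhammer a n) / (\<Prod>b\<leftarrow>bs. pochhammer b n) * u^n / fact n)"
      by (rule hyp_summable[OF hb]) (use cond that in auto)
    then show ?thesis unfolding t_def shuffle .
  qed
  have arg: "c * (x * \<alpha> ^ k)^2 = z0 * \<omega>^k" for k
    unfolding z0_def \<omega>_def by (simp add: power_mult_distrib power_mult[symmetric] mult.commute)
  have nw: "norm \<omega> = 1"
    unfolding \<omega>_def \<alpha>_def by (simp add: norm_power norm_exp)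
  define h where "h n = t n * z0^n * (if 5 dvd n then 5 else 0)" for n
  have hk: "(\<Sum>k=0..4. t n * (z0 * \<omega>^k)^n) = h n" for n
  proof -
    have "(\<Sum>k=0..4. t n * (z0 * \<omega>^k)^n) = t n * z0^n * (\<Sum>k=0..4. \<omega>^(k*n))"
      by (subst sum_distrib_left) (simp add: power_mult_distrib power_mult[symmetric] mult_ac)
    then show ?thesis unfolding h_def \<omega>_def \<alpha>_def using root_sum[of n] by simp
  qed
  have LHS: "(\<Sum>k=0..4. hypergeomF as bs (c * (x * \<alpha> ^ k)^2)) = (\<Sum>n. h n)"
  proof -
    have "(\<Sum>k=0..4. hypergeomF as bs (c * (x * \<alpha> ^ k)^2)) = (\<Sum>k=0..4. \<Sum>n. t n * (z0 * \<omega>^k)^n)"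
      by (simp add: hF arg)
    also have "\<dots> = (\<Sum>n. \<Sum>k=0..4. t n * (z0 * \<omega>^k)^n)"
      by (rule suminf_sum[symmetric], rule summ) (simp add: norm_mult norm_power nw)
    finally show ?thesis by (simp add: hk)
  qed
  have hsum: "summable h"
  proof -
    have "summable (\<lambda>n. \<Sum>k=0..4. t n * (z0 * \<omega>^k)^n)"
      by (rule summable_sum, rule summ) (simp add: norm_mult norm_power nw)
    then show ?thesis by (simp add: hk)
  qed
  have "(\<lambda>m. h (5*m)) sums (\<Sum>n. h n)"
  proof (subst sums_mono_reindex)
    show "strict_mono (\<lambda>m. 5*m :: nat)" by (rule strict_monoI) simp
    show "h n = 0" if "n \<notin> range (\<lambda>m. 5*m)" for n
      using that unfolding h_def by (auto elim!: dvdE)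
    show "h sums (\<Sum>n. h n)" using hsum by (rule summable_sums)
  qed
  moreover have "h (5*m) = 5 * (T m * w^m)" for m
  proof -
    define PA where "PA = (\<Prod>a\<leftarrow>split5 as. pochhammer a m)"
    define PB where "PB = (\<Prod>a\<leftarrow>split5 bs. pochhammer a m)"
    define P4 where "P4 = (\<Prod>b\<leftarrow>[1/5, 2/5, 3/5, 4/5::complex]. pochhammer b m)"
    have ea: "(\<Prod>a\<leftarrow>as. pochhammer a (5*m)) = 5^(5*m*p) * PA" unfolding PA_def p_def by (rule poch5_list)
    have eb: "(\<Prod>a\<leftarrow>bs. pochhammer a (5*m)) = 5^(5*m*q) * PB" unfolding PB_def q_def by (rule poch5_list)
    have ef: "(fact (5*m) :: complex) = 5^(5*m) * P4 * fact m" unfolding P4_def by (rule fact5)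
    have PBnz: "PB \<noteq> 0" using poch_nz[OF hb, of "5*m"] eb by auto
    have P4nz: "P4 \<noteq> 0" using ef by (metis fact_nonzero mult_zero_left mult_zero_right)
    have T: "T m = PA / (P4 * PB) / fact m" unfolding T_def PA_def PB_def P4_def by simp
    have pw: "(5::complex) powi (1 + int q - int p) = 5^(1+q) / 5^p"
    proof -
      have e: "1 + int q - int p = int (1+q) - int p" by simp
      have "(5::complex) powi (int (1+q) - int p) = 5 powi int (1+q) / 5 powi int p"
        by (rule power_int_diff) simp
      then show ?thesis unfolding e by (simp only: power_int_of_nat)
    qed
    have W: "w^m = z0^(5*m) * 5^(5*m*p) / (5^(5*m) * 5^(5*m*q))"
      unfolding w_def z0_def[symmetric] pw
      by (rule W)
    have "h (5*m) = t (5*m) * z0^(5*m) * 5" unfolding h_def by simp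
    also have "\<dots> = 5 * (T m * w^m)" unfolding t_def T W ea eb ef
      by (rule fin[OF PBnz P4nz]) simp
    finally show ?thesis .
  qed
  ultimately have "(\<lambda>m. 5 * (T m * w^m)) sums (\<Sum>n. h n)" by simp
  then have "(\<lambda>m. T m * w^m) sums ((\<Sum>n. h n) / 5)"
    using sums_divide[of "\<lambda>m. 5 * (T m * w^m)" _ 5] by simp
  then have "(\<Sum>m. T m * w^m) = (\<Sum>n. h n) / 5" by (rule sums_unique[symmetric])
  then show ?thesis unfolding LHS hF2 w_def[symmetric] by (simp add: mult.commute)
qed

end
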